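(* Let $C$ be a linear subspace of $\mathbb{F}_q^\nu$ endowed with the Hamming metric, with coset leader weight distribution $(\alpha_0,\alpha_1,\dots,\alpha_\nu)$. Then there exist a finite-dimensional vector space $V$ over $\mathbb{F}_q$ and a projective weight $\operatorname{wt}_{\mathcal{F}}$ on $V$ such that $\alpha_i=|\{v\in V:\operatorname{wt}_{\mathcal{F}}(v)=i\}|$ for every $i=0,1,\dots,\nu$.
   Context: The coset leader weight of a coset $y+C$ is $\min\{\operatorname{wt}_H(x):x\in y+C\}$; $\alpha_i$ is the number of cosets of $C$ in $\mathbb{F}_q^\nu$ of coset leader weight $i$. A projective weight on $V$ is $\operatorname{wt}_{\mathcal{F}}(v)=\min(\{|I|:I\subseteq\mathcal{F},v\in\langle I\rangle\}\cup\{\infty\})$ for a set $\mathcal{F}\subset V$ of pairwise linearly independent nonzero vectors. *)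

theory Defs
  imports Main "HOL-Library.Function_Algebras" "HOL-Library.Extended_Nat"
begin

(* Vectors of F_q^n are represented as functions nat => 'a vanishing outside {..<n}. *)
definition vspace :: "nat \<Rightarrow> (nat \<Rightarrow> 'a::field) set" where
  "vspace n = {x. \<forall>k\<ge>n. x k = 0}"

definition vscale :: "'a::field \<Rightarrow> (nat \<Rightarrow> 'a) \<Rightarrow> (nat \<Rightarrow> 'a)" where
  "vscale c x = (\<lambda>k. c * x k)"

definition hamming_wt :: "nat \<Rightarrow> (nat \<Rightarrow> 'a::field) \<Rightarrow> nat" where
  "hamming_wt n x = card {i. i < n \<and> x i \<noteq> 0}"

definition cosets :: "nat \<Rightarrow> (nat \<Rightarrow> 'a::field) set \<Rightarrow> (nat \<Rightarrow> 'a) set set" where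
  "cosets n C = {(\<lambda>c. y + c) ` C | y. y \<in> vspace n}"

definition coset_leader_wt :: "nat \<Rightarrow> (nat \<Rightarrow> 'a::field) set \<Rightarrow> nat" where
  "coset_leader_wt n S = Min (hamming_wt n ` S)"

definition alpha :: "nat \<Rightarrow> (nat \<Rightarrow> 'a::field) set \<Rightarrow> nat \<Rightarrow> nat" where
  "alpha n C i = card {S \<in> cosets n C. coset_leader_wt n S = i}"

definition pairwise_indep :: "(nat \<Rightarrow> 'a::field) set \<Rightarrow> bool" where
  "pairwise_indep F \<longleftrightarrow> 0 \<notin> F \<and>
     (\<forall>f\<in>F. \<forall>g\<in>F. f \<noteq> g \<longrightarrow> \<not> module.dependent vscale {f, g})"

definition proj_wt :: "(nat \<Rightarrow> 'a::field) set \<Rightarrow> (nat \<Rightarrow> 'a) \<Rightarrow> enat" where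
  "proj_wt F v = (INF I \<in> {I. I \<subseteq> F \<and> finite I \<and> v \<in> module.span vscale I}. enat (card I))"

end

theory Submission
  imports Defs
begin

interpretation V: vector_space vscale
  by unfold_locales (auto simp: vscale_def fun_eq_iff algebra_simps)

interpretation VP: vector_space_pair vscale vscale
  by unfold_locales

lemma vscale_apply: "vscale c x k = c * x k"
  by (simp add: vscale_def)

lemma sum_fun_apply: "(sum f A) k = sum (\<lambda>a. f a k) A"
  by (induction A rule: infinite_finite_induct) auto

definition ev :: "nat \<Rightarrow> nat \<Rightarrow> 'a::field" where
  "ev i = (\<lambda>k. if k = i then 1 else 0)"

lemma finite_vspace: "finite (vspace n :: (nat \<Rightarrow> 'a::{field,finite}) set)"
proof -
  have "vspace n = {f :: nat \<Rightarrow> 'a. \<forall>x. (x \<in> {..<n} \<longrightarrow> f x \<in> UNIV) \<and> (x \<notin> {..<n} \<longrightarrow> f x = 0)}"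
    by (auto simp: vspace_def)
  then show ?thesis using finite_set_of_finite_funs[of "{..<n}" "UNIV :: 'a set" 0] by simp
qed

lemma subspace_vspace: "V.subspace (vspace n)"
  by (auto simp: V.subspace_def vspace_def vscale_apply)

lemma vspace_expand:
  assumes "x \<in> vspace n"
  shows "x = (\<Sum>k<n. vscale (x k) (ev k))"
proof (rule ext)
  fix j
  have "(\<Sum>k<n. vscale (x k) (ev k)) j = (\<Sum>k<n. x k * ev k j)"
    by (simp add: sum_fun_apply vscale_apply)
  also have "\<dots> = (\<Sum>k<n. if j = k then x k else 0)"
    by (rule sum.cong) (auto simp: ev_def)
  also have "\<dots> = x j" using assms by (cases "j < n") (auto simp: vspace_def)
  finally show "x j = (\<Sum>k<n. vscale (x k) (ev k)) j" by simp
qed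

lemma ev_in: "i < n \<Longrightarrow> ev i \<in> vspace n"
  by (auto simp: ev_def vspace_def)

lemma vspace_span: "vspace n = V.span (ev ` {..<n})"
proof
  show "vspace n \<subseteq> V.span (ev ` {..<n})"
  proof
    fix x assume "x \<in> vspace n"
    then have "x = (\<Sum>k<n. vscale (x k) (ev k))" by (rule vspace_expand)
    also have "\<dots> \<in> V.span (ev ` {..<n})"
      by (intro V.span_sum V.span_scale V.span_base) auto
    finally show "x \<in> V.span (ev ` {..<n})" .
  qed
  show "V.span (ev ` {..<n}) \<subseteq> vspace n"
    by (intro V.span_minimal subspace_vspace) (auto intro: ev_in)
qed

lemma exists_phi:
  fixes C :: "(nat \<Rightarrow> 'a::{field,finite}) set"
  assumes CV: "C \<subseteq> vspace n" and sC: "V.subspace C"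
  shows "\<exists>m \<phi>. Vector_Spaces.linear vscale vscale \<phi> \<and> \<phi> ` vspace n = vspace m \<and> (\<forall>x\<in>vspace n. \<phi> x = 0 \<longleftrightarrow> x \<in> C)"
proof -
  obtain BC where BC: "BC \<subseteq> C" "V.independent BC" "C \<subseteq> V.span BC"
    by (rule V.maximal_independent_subset_extend[OF empty_subsetI V.independent_empty])
  obtain B where B: "BC \<subseteq> B" "B \<subseteq> vspace n" "V.independent B" "vspace n \<subseteq> V.span B"
    by (rule V.maximal_independent_subset_extend[of BC "vspace n"]) (use BC CV in auto)
  have spanBC: "V.span BC = C" using V.span_subspace[OF BC(1) BC(3) sC] .
  have fB: "finite B" using B(2) finite_vspace finite_subset by blast
  define D where "D = B - BC"
  define m where "m = card D"
  have fD: "finite D" using fB D_def by simp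
  obtain g where g: "bij_betw g {0..<m} D" using ex_bij_betw_nat_finite[OF fD] m_def by auto
  define h where "h = inv_into {0..<m} g"
  have h: "bij_betw h D {0..<m}" using bij_betw_inv_into[OF g] h_def by simp
  have hg: "k < m \<Longrightarrow> h (g k) = k" for k
    using g unfolding h_def bij_betw_def by (auto intro: inv_into_f_f)
  have gD: "k < m \<Longrightarrow> g k \<in> D" for k using g by (auto simp: bij_betw_def)
  have hm: "b \<in> D \<Longrightarrow> h b < m" for b using h by (auto simp: bij_betw_def)
  have hinj: "b \<in> D \<Longrightarrow> b' \<in> D \<Longrightarrow> h b = h b' \<Longrightarrow> b = b'" for b b'
    using h by (auto simp: bij_betw_def inj_on_def)
  define w where "w = (\<lambda>b. if b \<in> D then ev (h b) else (0 :: nat \<Rightarrow> 'a))"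
  define \<phi> where "\<phi> = VP.construct B w"
  have lin: "Vector_Spaces.linear vscale vscale \<phi>" unfolding \<phi>_def by (rule VP.linear_construct[OF B(3)])
  have \<phi>B: "b \<in> B \<Longrightarrow> \<phi> b = w b" for b unfolding \<phi>_def by (rule VP.construct_basis[OF B(3)])
  have wm: "w b \<in> vspace m" for b by (auto simp: w_def intro: ev_in hm subspace_vspace[THEN V.subspace_0])
  have rep: "\<exists>u. x = (\<Sum>b\<in>B. vscale (u b) b)" if "x \<in> vspace n" for x
    using B(4) that V.span_finite[OF fB] by auto
  have \<phi>sum: "\<phi> (\<Sum>b\<in>B. vscale (u b) b) = (\<Sum>b\<in>B. vscale (u b) (w b))" for u
    using lin \<phi>B by (simp add: VP.linear_sum VP.linear_scale)
  have ker: "\<phi> x = 0 \<longleftrightarrow> x \<in> C" if x: "x \<in> vspace n" for x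
  proof
    assume 0: "\<phi> x = 0"
    obtain u where u: "x = (\<Sum>b\<in>B. vscale (u b) b)" using rep[OF x] by auto
    have uD: "u b0 = 0" if b0: "b0 \<in> D" for b0
    proof -
      have "0 = \<phi> x (h b0)" using 0 by simp
      also have "\<dots> = (\<Sum>b\<in>B. u b * w b (h b0))" using u \<phi>sum by (simp add: sum_fun_apply vscale_apply)
      also have "\<dots> = (\<Sum>b\<in>B. if b = b0 then u b0 else 0)"
        by (rule sum.cong) (auto simp: w_def ev_def b0 dest: hinj[OF _ b0])
      also have "\<dots> = u b0" using b0 D_def fB by simp
      finally show ?thesis by simp
    qed
    have "x \<in> V.span BC" unfolding u
    proof (rule V.span_sum)
      fix b assume "b \<in> B"
      then show "vscale (u b) b \<in> V.span BC"
        by (cases "b \<in> BC") (auto simp: D_def uD V.span_base V.span_scale V.span_zero)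
    qed
    then show "x \<in> C" using spanBC by simp
  next
    assume "x \<in> C"
    then have "x \<in> V.span BC" using spanBC by simp
    moreover have "\<And>b. b \<in> BC \<Longrightarrow> \<phi> b = 0" using \<phi>B B(1) by (auto simp: w_def D_def)
    ultimately show "\<phi> x = 0" using VP.linear_eq_0_on_span[OF lin] by blast
  qed
  have img: "\<phi> ` vspace n = vspace m"
  proof
    show "\<phi> ` vspace n \<subseteq> vspace m"
    proof
      fix y assume "y \<in> \<phi> ` vspace n"
      then obtain x where x: "x \<in> vspace n" "y = \<phi> x" by auto
      obtain u where u: "x = (\<Sum>b\<in>B. vscale (u b) b)" using rep[OF x(1)] by auto
      have "y = (\<Sum>b\<in>B. vscale (u b) (w b))" using x u \<phi>sum by simp
      also have "\<dots> \<in> vspace m"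
        by (intro V.subspace_sum[OF subspace_vspace] V.subspace_scale[OF subspace_vspace] wm)
      finally show "y \<in> vspace m" .
    qed
    show "vspace m \<subseteq> \<phi> ` vspace n"
    proof
      fix v :: "nat \<Rightarrow> 'a" assume v: "v \<in> vspace m"
      define x where "x = (\<Sum>k<m. vscale (v k) (g k))"
      have "x \<in> vspace n" unfolding x_def
        using gD B(2) D_def
        by (intro V.subspace_sum[OF subspace_vspace] V.subspace_scale[OF subspace_vspace]) auto
      moreover have "\<phi> x = (\<Sum>k<m. vscale (v k) (\<phi> (g k)))"
        unfolding x_def using lin by (simp add: VP.linear_sum VP.linear_scale)
      moreover have "\<dots> = (\<Sum>k<m. vscale (v k) (ev k))"
        using gD B D_def by (intro sum.cong refl) (auto simp: \<phi>B w_def hg)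
      ultimately show "v \<in> \<phi> ` vspace n" using vspace_expand[OF v] by auto
    qed
  qed
  show ?thesis using lin img ker by blast
qed

lemma coset_eq:
  fixes C :: "(nat \<Rightarrow> 'a::field) set"
  assumes sC: "V.subspace C" and d: "y - y' \<in> C"
  shows "(\<lambda>c. y + c) ` C = (\<lambda>c. y' + c) ` C"
proof
  show "(\<lambda>c. y + c) ` C \<subseteq> (\<lambda>c. y' + c) ` C"
  proof
    fix z assume "z \<in> (\<lambda>c. y + c) ` C"
    then obtain c where c: "c \<in> C" "z = y + c" by auto
    have "(y - y') + c \<in> C" using V.subspace_add[OF sC d c(1)] .
    moreover have "z = y' + ((y - y') + c)" using c by (simp add: algebra_simps)
    ultimately show "z \<in> (\<lambda>c. y' + c) ` C" by blast
  qed
next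
  have d': "y' - y \<in> C" using V.subspace_neg[OF sC d] by (simp add: algebra_simps)
  show "(\<lambda>c. y' + c) ` C \<subseteq> (\<lambda>c. y + c) ` C"
  proof
    fix z assume "z \<in> (\<lambda>c. y' + c) ` C"
    then obtain c where c: "c \<in> C" "z = y' + c" by auto
    have "(y' - y) + c \<in> C" using V.subspace_add[OF sC d' c(1)] .
    moreover have "z = y + ((y' - y) + c)" using c by (simp add: algebra_simps)
    ultimately show "z \<in> (\<lambda>c. y + c) ` C" by blast
  qed
qed

lemma main_phi:
  fixes C :: "(nat \<Rightarrow> 'a::{field,finite}) set" and \<phi> :: "(nat \<Rightarrow> 'a) \<Rightarrow> (nat \<Rightarrow> 'a)"
  assumes lin: "Vector_Spaces.linear vscale vscale \<phi>" and img: "\<phi> ` vspace n = vspace m"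
    and ker: "\<forall>x\<in>vspace n. \<phi> x = 0 \<longleftrightarrow> x \<in> C" and CV: "C \<subseteq> vspace n" and sC: "V.subspace C"
  shows "\<exists>F :: (nat \<Rightarrow> 'a) set. F \<subseteq> vspace m \<and> pairwise_indep F \<and> (\<forall>i. alpha n C i = card {v \<in> vspace m. proj_wt F v = enat i})"
proof -
  define F where "F = {\<phi> (ev i) | i. i < n \<and> \<phi> (ev i) \<noteq> 0 \<and> (\<forall>j<i. \<forall>c. \<phi> (ev i) \<noteq> vscale c (\<phi> (ev j)))}"
  have Fm: "F \<subseteq> vspace m" using img ev_in unfolding F_def by blast
  have rep: "\<exists>f\<in>F. \<exists>c. \<phi> (ev i) = vscale c f" if i: "i < n" "\<phi> (ev i) \<noteq> 0" for i
  proof -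
    define P where "P j \<longleftrightarrow> (\<exists>c. \<phi> (ev i) = vscale c (\<phi> (ev j)))" for j
    have Pi: "P i" unfolding P_def by (rule exI[of _ 1]) simp
    define j0 where "j0 = (LEAST j. P j)"
    have Pj0: "P j0" using LeastI[of P, OF Pi] j0_def by simp
    have j0i: "j0 \<le> i" using Least_le[of P, OF Pi] j0_def by simp
    obtain c0 where c0: "\<phi> (ev i) = vscale c0 (\<phi> (ev j0))" using Pj0 P_def by auto
    have nz: "\<phi> (ev j0) \<noteq> 0" using c0 i(2) by auto
    have "\<forall>j<j0. \<forall>c. \<phi> (ev j0) \<noteq> vscale c (\<phi> (ev j))"
    proof (intro allI impI)
      fix j c assume j: "j < j0"
      show "\<phi> (ev j0) \<noteq> vscale c (\<phi> (ev j))"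
      proof
        assume "\<phi> (ev j0) = vscale c (\<phi> (ev j))"
        then have "P j" using c0 unfolding P_def by (intro exI[of _ "c0 * c"]) simp
        then show False using not_less_Least[of j P] j j0_def by simp
      qed
    qed
    then have "\<phi> (ev j0) \<in> F" using nz j0i i unfolding F_def by auto
    then show ?thesis using c0 by blast
  qed
  have pind: "pairwise_indep F"
    unfolding pairwise_indep_def
  proof (intro conjI ballI impI)
    show "0 \<notin> F" unfolding F_def by auto
    fix f g assume f: "f \<in> F" and g: "g \<in> F" and fg: "f \<noteq> g"
    show "\<not> V.dependent {f, g}"
    proof
      assume dep: "V.dependent {f, g}"
      obtain i where i: "f = \<phi> (ev i)" "i < n" "\<phi> (ev i) \<noteq> 0" "\<forall>j<i. \<forall>c. \<phi> (ev i) \<noteq> vscale c (\<phi> (ev j))"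
        using f unfolding F_def by auto
      obtain j where j: "g = \<phi> (ev j)" "j < n" "\<phi> (ev j) \<noteq> 0" "\<forall>i<j. \<forall>c. \<phi> (ev j) \<noteq> vscale c (\<phi> (ev i))"
        using g unfolding F_def by auto
      have "V.independent {g}" using j(1,3) by simp
      then have "f \<in> V.span {g}" using dep fg V.independent_insert[of f "{g}"] by auto
      then obtain c where c: "f = vscale c g" using V.span_singleton by auto
      have c0: "c \<noteq> 0" using c i(1,3) by auto
      have gc: "g = vscale (inverse c) f" using c c0 by simp
      have "i \<noteq> j" using fg i(1) j(1) by auto
      then consider "i < j" | "j < i" by linarith
      then show False
      proof cases
        case 1 then show False using j(4) gc i(1) j(1) by auto
      next
        case 2 then show False using i(4) c i(1) j(1) by auto
      qed
    qed
  qed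
  have fC: "finite C" using CV finite_vspace finite_subset by blast
  have C0: "0 \<in> C" using V.subspace_0[OF sC] .
  have "\<forall>f\<in>F. \<exists>i. i < n \<and> f = \<phi> (ev i)" unfolding F_def by auto
  then have "\<exists>idx. \<forall>f\<in>F. idx f < n \<and> f = \<phi> (ev (idx f))" by (rule bchoice)
  then obtain idx where idx: "\<And>f. f \<in> F \<Longrightarrow> idx f < n \<and> f = \<phi> (ev (idx f))" by blast
  have "\<forall>k. \<exists>f. \<exists>c. k < n \<longrightarrow> \<phi> (ev k) \<noteq> 0 \<longrightarrow> f \<in> F \<and> \<phi> (ev k) = vscale c f"
    using rep by blast
  then obtain rf where "\<forall>k. \<exists>c. k < n \<longrightarrow> \<phi> (ev k) \<noteq> 0 \<longrightarrow> rf k \<in> F \<and> \<phi> (ev k) = vscale c (rf k)"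
    by (rule choice[THEN exE])
  then obtain cc where "\<forall>k. k < n \<longrightarrow> \<phi> (ev k) \<noteq> 0 \<longrightarrow> rf k \<in> F \<and> \<phi> (ev k) = vscale (cc k) (rf k)"
    by (rule choice[THEN exE])
  then have rfc: "\<And>k. k < n \<Longrightarrow> \<phi> (ev k) \<noteq> 0 \<Longrightarrow> rf k \<in> F \<and> \<phi> (ev k) = vscale (cc k) (rf k)"
    by blast
  have key: "proj_wt F (\<phi> y) = enat (coset_leader_wt n ((\<lambda>c. y + c) ` C))" if y: "y \<in> vspace n" for y
  proof -
    define S where "S = (\<lambda>c. y + c) ` C"
    have fS: "finite S" using fC S_def by simp
    have yS: "y \<in> S" using C0 S_def by (auto intro: image_eqI[of _ _ 0])
    have SV: "S \<subseteq> vspace n" using y CV V.subspace_add[OF subspace_vspace] S_def by auto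
    have A: "\<exists>x\<in>S. hamming_wt n x \<le> card I" if I: "I \<subseteq> F" "finite I" "\<phi> y \<in> V.span I" for I
    proof -
      obtain u where u: "\<phi> y = (\<Sum>f\<in>I. vscale (u f) f)" using I(3) V.span_finite[OF I(2)] by auto
      define x where "x = (\<Sum>f\<in>I. vscale (u f) (ev (idx f)))"
      have xV: "x \<in> vspace n" unfolding x_def using idx I(1)
        by (intro V.subspace_sum[OF subspace_vspace] V.subspace_scale[OF subspace_vspace] ev_in) auto
      have "\<phi> x = (\<Sum>f\<in>I. vscale (u f) (\<phi> (ev (idx f))))"
        unfolding x_def using lin by (simp add: VP.linear_sum VP.linear_scale)
      also have "\<dots> = \<phi> y" unfolding u using idx I(1) by (intro sum.cong refl) auto
      finally have "\<phi> (x - y) = 0" by (metis VP.linear_diff[OF lin] diff_self)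
      moreover have "x - y \<in> vspace n" using V.subspace_diff[OF subspace_vspace xV y] .
      ultimately have "x - y \<in> C" using ker by blast
      then have xS: "x \<in> S" unfolding S_def by (intro image_eqI[of _ _ "x - y"]) auto
      have "{k. k < n \<and> x k \<noteq> 0} \<subseteq> idx ` I"
      proof
        fix k assume k: "k \<in> {k. k < n \<and> x k \<noteq> 0}"
        show "k \<in> idx ` I"
        proof (rule ccontr)
          assume "k \<notin> idx ` I"
          then have "x k = 0" unfolding x_def
            by (auto simp: sum_fun_apply vscale_apply ev_def intro!: sum.neutral)
          then show False using k by simp
        qed
      qed
      then have "hamming_wt n x \<le> card (idx ` I)" unfolding hamming_wt_def
        using I(2) by (intro card_mono) auto
      also have "\<dots> \<le> card I" using I(2) by (rule card_image_le)
      finally show ?thesis using xS by blast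
    qed
    have B: "\<exists>I. I \<subseteq> F \<and> finite I \<and> \<phi> y \<in> V.span I \<and> card I \<le> hamming_wt n x" if x: "x \<in> S" for x
    proof -
      obtain c where c: "c \<in> C" "x = y + c" using x S_def by auto
      have xV: "x \<in> vspace n" using x SV by auto
      have "\<phi> x = \<phi> y + \<phi> c" using c by (metis VP.linear_add[OF lin])
      then have \<phi>xy: "\<phi> x = \<phi> y" using ker c CV by auto
      define K where "K = {k. k < n \<and> x k \<noteq> 0 \<and> \<phi> (ev k) \<noteq> 0}"
      define I where "I = rf ` K"
      have fK: "finite K" unfolding K_def by simp
      have IF: "I \<subseteq> F" unfolding I_def K_def using rfc by auto
      have "\<phi> x = \<phi> (\<Sum>k<n. vscale (x k) (ev k))"
        by (rule arg_cong[where f=\<phi>, OF vspace_expand[OF xV]])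
      also have "\<dots> = (\<Sum>k<n. vscale (x k) (\<phi> (ev k)))"
        using lin by (simp add: VP.linear_sum VP.linear_scale)
      also have "\<dots> \<in> V.span I"
      proof (rule V.span_sum)
        fix k assume k: "k \<in> {..<n}"
        show "vscale (x k) (\<phi> (ev k)) \<in> V.span I"
        proof (cases "k \<in> K")
          case True
          then have rI: "rf k \<in> I" unfolding I_def by auto
          have r: "\<phi> (ev k) = vscale (cc k) (rf k)" using rfc[of k] True unfolding K_def by auto
          have "\<phi> (ev k) \<in> V.span I" unfolding r by (rule V.span_scale[OF V.span_base[OF rI]])
          then show ?thesis by (rule V.span_scale)
        next
          case False
          then have "vscale (x k) (\<phi> (ev k)) = 0" using k unfolding K_def by auto
          then show ?thesis by (metis V.span_zero)
        qed
      qed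
      finally have sp: "\<phi> y \<in> V.span I" using \<phi>xy by simp
      have "card I \<le> card K" unfolding I_def using fK by (rule card_image_le)
      also have "\<dots> \<le> hamming_wt n x" unfolding hamming_wt_def K_def by (intro card_mono) auto
      finally show ?thesis using IF fK sp I_def by blast
    qed
    define w where "w = coset_leader_wt n S"
    have wdef: "w = Min (hamming_wt n ` S)" unfolding w_def coset_leader_wt_def ..
    obtain x0 where x0: "x0 \<in> S" "hamming_wt n x0 = w"
    proof -
      have "Min (hamming_wt n ` S) \<in> hamming_wt n ` S" using fS yS by (intro Min_in) auto
      then show ?thesis using that wdef by auto
    qed
    obtain I0 where I0: "I0 \<subseteq> F" "finite I0" "\<phi> y \<in> V.span I0" "card I0 \<le> w"
      using B[OF x0(1)] x0(2) by auto
    have le1: "proj_wt F (\<phi> y) \<le> enat w"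
    proof -
      have "proj_wt F (\<phi> y) \<le> enat (card I0)" unfolding proj_wt_def
        using I0 by (intro INF_lower) auto
      also have "\<dots> \<le> enat w" using I0(4) by simp
      finally show ?thesis .
    qed
    have le2: "enat w \<le> proj_wt F (\<phi> y)" unfolding proj_wt_def
    proof (rule INF_greatest)
      fix I assume "I \<in> {I. I \<subseteq> F \<and> finite I \<and> \<phi> y \<in> module.span vscale I}"
      then obtain x where "x \<in> S" "hamming_wt n x \<le> card I" using A by auto
      moreover have "w \<le> hamming_wt n x" using wdef fS \<open>x \<in> S\<close> by simp
      ultimately show "enat w \<le> enat (card I)" by simp
    qed
    show ?thesis using le1 le2 w_def S_def by simp
  qed
  define pre where "pre v = (SOME y. y \<in> vspace n \<and> \<phi> y = v)" for v
  have pre: "pre v \<in> vspace n \<and> \<phi> (pre v) = v" if "v \<in> vspace m" for v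
  proof -
    have "\<exists>y. y \<in> vspace n \<and> \<phi> y = v" proof -
      have "v \<in> \<phi> ` vspace n" using that img by simp
      then show ?thesis by auto
    qed
    then show ?thesis unfolding pre_def by (rule someI_ex)
  qed
  define hc where "hc v = (\<lambda>c. pre v + c) ` C" for v
  have ceq: "(\<lambda>c. y + c) ` C = (\<lambda>c. y' + c) ` C"
    if "y \<in> vspace n" "y' \<in> vspace n" "\<phi> y = \<phi> y'" for y y'
  proof (rule coset_eq[OF sC])
    have "\<phi> (y - y') = 0" using VP.linear_diff[OF lin, of y y'] that(3) by simp
    moreover have "y - y' \<in> vspace n" using V.subspace_diff[OF subspace_vspace that(1,2)] .
    ultimately show "y - y' \<in> C" using ker by blast
  qed
  have cnt: "alpha n C i = card {v \<in> vspace m. proj_wt F v = enat i}" for i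
  proof -
    have "bij_betw hc {v \<in> vspace m. proj_wt F v = enat i} {S \<in> cosets n C. coset_leader_wt n S = i}"
      unfolding bij_betw_def
    proof (intro conjI)
      show "inj_on hc {v \<in> vspace m. proj_wt F v = enat i}"
      proof (rule inj_onI)
        fix v v' assume v: "v \<in> {v \<in> vspace m. proj_wt F v = enat i}"
          and v': "v' \<in> {v \<in> vspace m. proj_wt F v = enat i}" and e: "hc v = hc v'"
        have "pre v \<in> hc v" unfolding hc_def using C0 by (intro image_eqI[of _ _ 0]) auto
        then obtain c where c: "c \<in> C" "pre v = pre v' + c" using e unfolding hc_def by auto
        have "\<phi> (pre v) = \<phi> (pre v') + \<phi> c" using c by (metis VP.linear_add[OF lin])
        also have "\<phi> c = 0" using ker c CV by auto
        finally show "v = v'" using pre v v' by auto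
      qed
      show "hc ` {v \<in> vspace m. proj_wt F v = enat i} = {S \<in> cosets n C. coset_leader_wt n S = i}"
      proof
        show "hc ` {v \<in> vspace m. proj_wt F v = enat i} \<subseteq> {S \<in> cosets n C. coset_leader_wt n S = i}"
        proof
          fix S assume "S \<in> hc ` {v \<in> vspace m. proj_wt F v = enat i}"
          then obtain v where v: "v \<in> vspace m" "proj_wt F v = enat i" "S = hc v" by auto
          have "S \<in> cosets n C" using pre[OF v(1)] v(3) unfolding cosets_def hc_def by auto
          moreover have "enat (coset_leader_wt n S) = enat i"
            using key[of "pre v"] pre[OF v(1)] v unfolding hc_def by simp
          ultimately show "S \<in> {S \<in> cosets n C. coset_leader_wt n S = i}" by simp
        qed
        show "{S \<in> cosets n C. coset_leader_wt n S = i} \<subseteq> hc ` {v \<in> vspace m. proj_wt F v = enat i}"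
        proof
          fix S assume S: "S \<in> {S \<in> cosets n C. coset_leader_wt n S = i}"
          then obtain y where y: "y \<in> vspace n" "S = (\<lambda>c. y + c) ` C" unfolding cosets_def by auto
          define v where "v = \<phi> y"
          have vm: "v \<in> vspace m" using img y v_def by auto
          have hv: "hc v = S" unfolding hc_def y(2) using pre[OF vm] y(1) v_def by (intro ceq) auto
          have "proj_wt F v = enat i" using key[OF y(1)] S y(2) v_def by simp
          then show "S \<in> hc ` {v \<in> vspace m. proj_wt F v = enat i}" using vm hv by blast
        qed
      qed
    qed
    then show ?thesis unfolding alpha_def by (simp add: bij_betw_same_card)
  qed
  have "F \<subseteq> vspace m \<and> pairwise_indep F \<and> (\<forall>i. alpha n C i = card {v \<in> vspace m. proj_wt F v = enat i})"
    using Fm pind cnt by simp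
  then show ?thesis by (rule exI)
qed

theorem proposition6p3:
  fixes C :: "(nat \<Rightarrow> 'a::{field,finite}) set" and \<nu> :: nat
  assumes "C \<subseteq> vspace \<nu>" and "module.subspace vscale C"
  shows "\<exists>m. \<exists>F :: (nat \<Rightarrow> 'a) set. F \<subseteq> vspace m \<and> pairwise_indep F \<and>
           (\<forall>i\<le>\<nu>. alpha \<nu> C i = card {v \<in> vspace m. proj_wt F v = enat i})"
proof -
  obtain m \<phi> where "Vector_Spaces.linear vscale vscale \<phi>" "\<phi> ` vspace \<nu> = vspace m"
    "\<forall>x\<in>vspace \<nu>. \<phi> x = 0 \<longleftrightarrow> x \<in> C"
    using exists_phi[OF assms] by blast
  from main_phi[OF this assms] obtain F :: "(nat \<Rightarrow> 'a) set" where
    "F \<subseteq> vspace m" "pairwise_indep F" "\<forall>i. alpha \<nu> C i = card {v \<in> vspace m. proj_wt F v = enat i}"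
    by blast
  then show ?thesis by blast
qed

end
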